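(* For every $\varepsilon>0$ there exists $\delta>0$ such that whenever $\mu$ is a positive Radon measure on $\mathbb{R}$ satisfying $\mu(I)\le(1+\delta)\mu(J)$ for all adjacent intervals $I,J$ of equal length, then for all $z$ in the upper half-plane $\mathbb{H}=\{\operatorname{Im}z>0\}$, \[\Big|\int_{\mathbb{R}}\frac{d\mu(t)}{(t-z)^2}\Big|\le\varepsilon\int_{\mathbb{R}}\frac{d\mu(t)}{|t-z|^2}<\infty.\] *)

theory Defs
  imports "HOL-Analysis.Analysis"
begin

definition radon_measure_real :: "real measure \<Rightarrow> bool" where
  "radon_measure_real M \<longleftrightarrow> sets M = sets borel \<and> (\<forall>K. compact K \<longrightarrow> emeasure M K < \<infinity>)"

definition adj_interval_cond :: "real \<Rightarrow> real measure \<Rightarrow> bool" where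
  "adj_interval_cond \<delta> M \<longleftrightarrow>
     (\<forall>x h. h > 0 \<longrightarrow>
        emeasure M {x - h..x} \<le> ennreal (1 + \<delta>) * emeasure M {x..x + h} \<and>
        emeasure M {x..x + h} \<le> ennreal (1 + \<delta>) * emeasure M {x - h..x})"

end

theory Submission
  imports Defs
begin


lemma ennreal_le_suminf: "(f i :: ennreal) \<le> (\<Sum>i. f i)"
  by (metis ennreal_suminf_lessD not_le order_less_irrefl)

lemma ptw_exists:
  fixes s :: real
  assumes "K = 0 \<or> 2^K \<le> \<bar>s\<bar>"
  shows "\<exists>k\<ge>K. \<bar>s\<bar> \<le> 2^k \<and> 1/(1+s^2) \<le> 4/4^k"
proof -
  obtain k0 where "\<bar>s\<bar> < 2^k0" using real_arch_pow[of 2 "\<bar>s\<bar>"] by auto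
  define k where "k = (LEAST k. \<bar>s\<bar> \<le> (2::real)^k)"
  have Pk: "\<bar>s\<bar> \<le> 2^k" unfolding k_def by (rule LeastI[of _ k0]) (use \<open>\<bar>s\<bar> < 2^k0\<close> in auto)
  have Kk: "K \<le> k"
  proof (cases "K = 0")
    case False
    with assms have "(2::real)^K \<le> \<bar>s\<bar>" by simp
    then have "(2::real)^K \<le> 2^k" using Pk by linarith
    then show ?thesis by (rule power_le_imp_le_exp[rotated]) simp
  qed simp
  have p: "0 < 1 + s^2" by (metis add_pos_nonneg zero_less_one zero_le_power2)
  have "1/(1+s^2) \<le> 4/4^k"
  proof (cases "k = 0")
    case True
    from p have "1/(1+s^2) \<le> 1" by (simp add: divide_le_eq_1)
    then show ?thesis using True by simp
  next
    case False
    then have "\<not> \<bar>s\<bar> \<le> 2^(k-1)" unfolding k_def by (intro not_less_Least) (use False k_def in auto)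
    then have lt: "(2::real)^(k-1) < \<bar>s\<bar>" by simp
    have "(2::real)^(k-1) * 2^(k-1) < \<bar>s\<bar> * \<bar>s\<bar>"
      using lt by (intro mult_strict_mono) auto
    then have "4^(k-1) < s^2" by (simp add: power2_eq_square power_mult_distrib[symmetric])
    then have "4^(k-1) < 1 + s^2" by simp
    then have "1/(1+s^2) \<le> 1/4^(k-1)"
      using p by (intro divide_left_mono) (auto intro!: mult_pos_pos)
    also have "1/(4::real)^(k-1) = 4/4^k"
      using False by (cases k) (auto simp: field_simps)
    finally show ?thesis .
  qed
  then show ?thesis using Kk Pk by blast
qed

lemma ptw:
  fixes s :: real
  assumes "K = 0 \<or> 2^K \<le> \<bar>s\<bar>"
  shows "ennreal (1/(1+s^2)) \<le> (\<Sum>n. ennreal (4/4^(n+K)) * indicator {-(2^(n+K))..2^(n+K)} s)"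
proof -
  obtain k where k: "k \<ge> K" "\<bar>s\<bar> \<le> 2^k" "1/(1+s^2) \<le> 4/4^k"
    using ptw_exists[OF assms] by blast
  have "ennreal (1/(1+s^2)) \<le> ennreal (4/4^((k-K)+K)) * indicator {-(2^((k-K)+K))..2^((k-K)+K)} s"
    using k by (auto simp: ennreal_leI abs_le_iff)
  also have "\<dots> \<le> (\<Sum>n. ennreal (4/4^(n+K)) * indicator {-(2^(n+K))..2^(n+K)} s)"
    by (rule ennreal_le_suminf[where f="\<lambda>n. ennreal (4/4^(n+K)) * indicator {-(2^(n+K))..2^(n+K)} s"])
  finally show ?thesis .
qed

locale qs =
  fixes \<nu> :: "real measure" and \<delta> :: real
  assumes sets_nu: "sets \<nu> = sets borel"
    and fin: "\<And>a b. emeasure \<nu> {a..b} < \<infinity>"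
    and adj: "adj_interval_cond \<delta> \<nu>"
    and dpos: "0 < \<delta>" and dsmall: "\<delta> \<le> 1/4"
begin

lemma space_nu[simp]: "space \<nu> = UNIV"
  using sets_eq_imp_space_eq[OF sets_nu] by simp

lemma sets_nu_borel[measurable_cong, simp]: "A \<in> sets \<nu> \<longleftrightarrow> A \<in> sets borel"
  using sets_nu by simp

lemma meas_nu: "f \<in> borel_measurable borel \<Longrightarrow> f \<in> borel_measurable \<nu>"
  using measurable_cong_sets[OF sets_nu refl] by blast

lemma fin_sub: "A \<subseteq> {a..b} \<Longrightarrow> A \<in> sets borel \<Longrightarrow> emeasure \<nu> A < \<infinity>"
  by (meson emeasure_mono fin le_less_trans sets_nu_borel atLeastAtMost_borel)

lemma emeas_real: "A \<subseteq> {a..b} \<Longrightarrow> A \<in> sets borel \<Longrightarrow> emeasure \<nu> A = ennreal (measure \<nu> A)"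
  by (intro emeasure_eq_ennreal_measure) (use fin_sub[of A a b] in auto)

lemma adj_real:
  assumes "h > 0"
  shows "measure \<nu> {x-h..x} \<le> (1+\<delta>) * measure \<nu> {x..x+h}"
    and "measure \<nu> {x..x+h} \<le> (1+\<delta>) * measure \<nu> {x-h..x}"
proof -
  have e1: "emeasure \<nu> {x-h..x} = ennreal (measure \<nu> {x-h..x})"
    by (rule emeas_real) auto
  have e2: "emeasure \<nu> {x..x+h} = ennreal (measure \<nu> {x..x+h})"
    by (rule emeas_real) auto
  have "emeasure \<nu> {x - h..x} \<le> ennreal (1 + \<delta>) * emeasure \<nu> {x..x + h} \<and>
        emeasure \<nu> {x..x + h} \<le> ennreal (1 + \<delta>) * emeasure \<nu> {x - h..x}"
    using adj assms unfolding adj_interval_cond_def by blast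
  then have "ennreal (measure \<nu> {x-h..x}) \<le> ennreal ((1+\<delta>) * measure \<nu> {x..x+h})"
       and "ennreal (measure \<nu> {x..x+h}) \<le> ennreal ((1+\<delta>) * measure \<nu> {x-h..x})"
    using e1 e2 dpos by (auto simp: ennreal_mult)
  then show "measure \<nu> {x-h..x} \<le> (1+\<delta>) * measure \<nu> {x..x+h}"
    and "measure \<nu> {x..x+h} \<le> (1+\<delta>) * measure \<nu> {x-h..x}"
    using dpos by (auto simp: ennreal_le_iff)
qed

lemma no_atom: "measure \<nu> {a} = 0"
proof -
  define A where "A k = {a<..a + 1/Suc k}" for k :: nat
  have u: "1 / (1 + real k) \<le> 1" for k by (simp add: field_simps)
  have Asub: "A k \<subseteq> {a..a+1}" for k
  proof
    fix x assume "x \<in> A k"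
    then have "a < x" "x \<le> a + 1 / (1 + real k)" by (auto simp: A_def)
    with u[of k] show "x \<in> {a..a+1}" unfolding atLeastAtMost_iff by linarith
  qed
  have dec: "decseq A"
  proof (rule decseq_SucI)
    fix k
    have "1 / real (Suc (Suc k)) \<le> 1 / real (Suc k)"
      by (rule divide_left_mono) auto
    then show "A (Suc k) \<subseteq> A k" unfolding A_def by auto
  qed
  have "(\<lambda>k. measure \<nu> (A k)) \<longlonglongrightarrow> measure \<nu> (\<Inter>k. A k)"
  proof (rule Lim_measure_decseq)
    show "range A \<subseteq> sets \<nu>" by (auto simp: A_def)
    show "decseq A" by (rule dec)
    fix k
    from Asub[of k] show "emeasure \<nu> (A k) \<noteq> \<infinity>"
      using fin_sub[of "A k" a "a+1"] by (auto simp: A_def)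
  qed
  moreover have "(\<Inter>k. A k) = {}"
  proof (rule ccontr)
    assume "(\<Inter>k. A k) \<noteq> {}"
    then obtain s where s: "\<And>k. s \<in> A k" by blast
    then have "s > a" by (auto simp: A_def)
    then obtain k where "1 / real (Suc k) < s - a"
      by (metis diff_gt_0_iff_gt inverse_eq_divide reals_Archimedean)
    with s[of k] show False by (auto simp: A_def)
  qed
  ultimately have lim: "(\<lambda>k. measure \<nu> (A k)) \<longlonglongrightarrow> 0" by simp
  have bnd: "measure \<nu> {a} \<le> (1+\<delta>) * measure \<nu> (A k)" for k
  proof -
    define h where "h = 1 / (2 * real (Suc k))"
    have h: "h > 0" by (simp add: h_def)
    have f1: "{a..a+h} \<in> fmeasurable \<nu>"
      using fin_sub[of "{a..a+h}" a "a+h"] by (simp add: fmeasurable_def)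
    have hh: "a + h + h = a + 1 / Suc k" by (simp add: h_def field_simps)
    have f2: "A k \<in> fmeasurable \<nu>"
      using fin_sub[OF Asub[of k]] unfolding fmeasurable_def
      by (auto simp: A_def)
    have s2: "{a+h..a+h+h} \<subseteq> A k" using h hh unfolding A_def by auto
    have "measure \<nu> {a} \<le> measure \<nu> {a..a+h}"
      using f1 by (intro measure_mono_fmeasurable) (use h in auto)
    also have "\<dots> \<le> (1+\<delta>) * measure \<nu> {a+h..a+h+h}"
      using adj_real(1)[OF h, of "a+h"] by simp
    also have "\<dots> \<le> (1+\<delta>) * measure \<nu> (A k)"
      using dpos f2 s2 by (intro mult_left_mono measure_mono_fmeasurable) auto
    finally show ?thesis .
  qed
  have "measure \<nu> {a} \<le> (1+\<delta>) * 0"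
    by (rule LIMSEQ_le_const[OF tendsto_mult_left[OF lim]]) (use bnd in auto)
  then show ?thesis by (simp add: measure_nonneg antisym)
qed

lemma null_pt: "{a} \<in> null_sets \<nu>"
proof -
  have "emeasure \<nu> {a} = ennreal (measure \<nu> {a})"
    by (rule emeas_real[of _ a a]) auto
  then show ?thesis using no_atom[of a] by (auto simp: null_sets_def)
qed

lemma halfopen: "measure \<nu> {a..<b} = measure \<nu> {a..b}"
proof (cases "a \<le> b")
  case True
  then have "{a..b} = {a..<b} \<union> {b}" by auto
  then show ?thesis using measure_Un_null_set[OF _ null_pt, of "{a..<b}" b] by simp
next
  case False
  then show ?thesis by simp
qed

lemma mono_m: "A \<subseteq> B \<Longrightarrow> B \<subseteq> {a..b} \<Longrightarrow> A \<in> sets borel \<Longrightarrow> B \<in> sets borel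
   \<Longrightarrow> measure \<nu> A \<le> measure \<nu> B"
  by (intro measure_mono_fmeasurable) (use fin_sub[of B a b] in \<open>auto simp: fmeasurable_def\<close>)

lemma doubling:
  assumes r: "r > 0"
  shows "measure \<nu> {-(2*r)..2*r} \<le> 7/2 * measure \<nu> {-r..r}"
proof -
  have e: "{-(2*r)..2*r} = ({-(2*r)..-r} \<union> {-r..r}) \<union> {r..2*r}" using r by auto
  have "measure \<nu> {-(2*r)..2*r} \<le> measure \<nu> ({-(2*r)..-r} \<union> {-r..r}) + measure \<nu> {r..2*r}"
    unfolding e by (rule measure_Un_le) auto
  also have "\<dots> \<le> (measure \<nu> {-(2*r)..-r} + measure \<nu> {-r..r}) + measure \<nu> {r..2*r}"
    by (intro add_right_mono measure_Un_le) auto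
  finally have 1: "measure \<nu> {-(2*r)..2*r} \<le> measure \<nu> {-(2*r)..-r} + measure \<nu> {-r..r} + measure \<nu> {r..2*r}" .
  have a1: "measure \<nu> {-(2*r)..-r} \<le> (1+\<delta>) * measure \<nu> {-r..0}"
    using adj_real(1)[OF r, of "-r"] by (simp add: algebra_simps)
  have a2: "measure \<nu> {r..2*r} \<le> (1+\<delta>) * measure \<nu> {0..r}"
    using adj_real(2)[OF r, of "r"] by (simp add: algebra_simps)
  have b1: "measure \<nu> {-r..0} \<le> measure \<nu> {-r..r}" by (rule mono_m[of _ _ "-r" r]) (use r in auto)
  have b2: "measure \<nu> {0..r} \<le> measure \<nu> {-r..r}" by (rule mono_m[of _ _ "-r" r]) (use r in auto)
  have "(1+\<delta>) * measure \<nu> {-r..0} \<le> (1+\<delta>) * measure \<nu> {-r..r}"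
    using b1 dpos by (intro mult_left_mono) auto
  moreover have "(1+\<delta>) * measure \<nu> {0..r} \<le> (1+\<delta>) * measure \<nu> {-r..r}"
    using b2 dpos by (intro mult_left_mono) auto
  moreover have "(3 + 2*\<delta>) * measure \<nu> {-r..r} \<le> 7/2 * measure \<nu> {-r..r}"
    using dsmall by (intro mult_right_mono) auto
  ultimately show ?thesis using 1 a1 a2 by (simp add: algebra_simps)
qed

lemma doubling_pow: "measure \<nu> {-(2^k)..2^k} \<le> (7/2)^k * measure \<nu> {-1..1}"
proof (induction k)
  case 0 then show ?case by simp
next
  case (Suc k)
  have "measure \<nu> {-(2^Suc k)..2^Suc k} = measure \<nu> {-(2*2^k)..2*2^k}" by simp
  also have "\<dots> \<le> 7/2 * measure \<nu> {-(2^k)..2^k}" by (rule doubling) simp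
  also have "\<dots> \<le> 7/2 * ((7/2)^k * measure \<nu> {-1..1})"
    using Suc by (intro mult_left_mono) auto
  finally show ?case by simp
qed

lemma geo_sum: "(\<Sum>n. 4 * c * (7/8::real)^(n+K)) = 32 * (7/8)^K * c"
proof -
  have "(\<Sum>n. 4 * c * (7/8::real)^(n+K)) = (\<Sum>n. (4 * c * (7/8)^K) * (7/8::real)^n)"
    by (simp add: power_add mult_ac)
  also have "\<dots> = (4 * c * (7/8)^K) * (\<Sum>n. (7/8::real)^n)"
    by (rule suminf_mult) (simp add: summable_geometric)
  also have "(\<Sum>n. (7/8::real)^n) = 8"
    by (subst suminf_geometric) auto
  finally show ?thesis by simp
qed

lemma nn_tail:
  "(\<integral>\<^sup>+ s. ennreal (1/(1+s^2)) * indicator {s. K = 0 \<or> 2^K \<le> \<bar>s\<bar>} s \<partial>\<nu>)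
     \<le> ennreal (32*(7/8)^K * measure \<nu> {-1..1})"
proof -
  define c where "c n = 4/(4::real)^(n+K)" for n
  define B where "B n = {-(2^(n+K))..(2::real)^(n+K)}" for n
  define m1 where "m1 = measure \<nu> {-1..1}"
  have m1: "0 \<le> m1" by (simp add: m1_def)
  have "(\<integral>\<^sup>+ s. ennreal (1/(1+s^2)) * indicator {s. K = 0 \<or> 2^K \<le> \<bar>s\<bar>} s \<partial>\<nu>)
      \<le> (\<integral>\<^sup>+ s. (\<Sum>n. ennreal (c n) * indicator (B n) s) \<partial>\<nu>)"
  proof (rule nn_integral_mono)
    fix s
    show "ennreal (1/(1+s^2)) * indicator {s. K = 0 \<or> 2^K \<le> \<bar>s\<bar>} s
        \<le> (\<Sum>n. ennreal (c n) * indicator (B n) s)"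
      using ptw[of K s] unfolding c_def B_def by (auto simp: indicator_def)
  qed
  also have "\<dots> = (\<Sum>n. \<integral>\<^sup>+ s. ennreal (c n) * indicator (B n) s \<partial>\<nu>)"
    by (rule nn_integral_suminf)
       (intro borel_measurable_times_ennreal borel_measurable_const borel_measurable_indicator, simp add: B_def)
  also have "\<dots> = (\<Sum>n. ennreal (c n) * emeasure \<nu> (B n))"
    by (subst nn_integral_cmult_indicator) (auto simp: B_def)
  also have "\<dots> \<le> (\<Sum>n. ennreal (4 * m1 * (7/8)^(n+K)))"
  proof (rule suminf_le[OF _ summableI summableI])
    fix n
    have "emeasure \<nu> (B n) = ennreal (measure \<nu> (B n))"
      unfolding B_def by (rule emeas_real) auto
    moreover have "measure \<nu> (B n) \<le> (7/2)^(n+K) * m1"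
      unfolding B_def m1_def by (rule doubling_pow)
    moreover have "c n * ((7/2)^(n+K) * m1) = 4 * m1 * (7/8)^(n+K)"
    proof -
      have "(2::real)^(n+K) * 4^(n+K) = 8^(n+K)" by (simp add: power_mult_distrib[symmetric])
      then show ?thesis unfolding c_def by (simp add: power_divide field_simps)
    qed
    moreover have "0 \<le> c n" by (simp add: c_def)
    ultimately show "ennreal (c n) * emeasure \<nu> (B n) \<le> ennreal (4 * m1 * (7/8)^(n+K))"
      by (metis ennreal_mult' ennreal_leI mult_left_mono measure_nonneg)
  qed
  also have "\<dots> = ennreal (\<Sum>n. 4 * m1 * (7/8)^(n+K))"
    by (rule suminf_ennreal2) (use m1 in \<open>auto intro!: summable_mult summable_ignore_initial_segment simp: summable_geometric\<close>)
  also have "\<dots> = ennreal (32*(7/8)^K * m1)" by (simp add: geo_sum)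
  finally show ?thesis by (simp add: m1_def)
qed

end



lemma cm_sq: "(cmod (complex_of_real s - \<i>))^2 = 1 + s^2"
  by (simp add: cmod_power2)

lemma cm_ge1: "1 \<le> cmod (complex_of_real s - \<i>)"
  using cm_sq[of s] power2_nonneg_ge_1_iff[of "cmod (complex_of_real s - \<i>)"] by simp

lemma cm_nz: "complex_of_real s - \<i> \<noteq> 0"
  using cm_ge1[of s] by auto

lemma fi_norm: "cmod (1 / (complex_of_real s - \<i>)^2) = 1/(1+s^2)"
  by (simp add: norm_divide norm_power cm_sq)

lemma gi_eq: "1 / (cmod (complex_of_real s - \<i>))^2 = 1/(1+s^2)"
  by (simp add: cm_sq)

lemma lip:
  "cmod (1 / (complex_of_real s - \<i>)^2 - 1 / (complex_of_real a - \<i>)^2) \<le> 2 * \<bar>s - a\<bar>"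
proof -
  define u where "u = complex_of_real s - \<i>"
  define v where "v = complex_of_real a - \<i>"
  have u0: "u \<noteq> 0" and v0: "v \<noteq> 0" using cm_nz by (auto simp: u_def v_def)
  have nu: "1 \<le> cmod u" and nv: "1 \<le> cmod v" using cm_ge1 by (auto simp: u_def v_def)
  have eq: "1/u^2 - 1/v^2 = (v - u) * (v + u) / (u^2 * v^2)"
    using u0 v0 by (simp add: field_simps power2_eq_square)
  have "v - u = complex_of_real (a - s)" by (simp add: u_def v_def)
  then have vu: "cmod (v - u) = \<bar>s - a\<bar>" by (metis norm_of_real abs_minus_commute)
  have "cmod (1/u^2 - 1/v^2) = cmod (v - u) * cmod (v + u) / (cmod u ^2 * cmod v ^2)"
    unfolding eq by (simp add: norm_mult norm_divide norm_power)
  also have "\<dots> \<le> cmod (v - u) * (cmod u + cmod v) / (cmod u ^2 * cmod v ^2)"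
    by (intro divide_right_mono mult_left_mono norm_triangle_ineq[of v u, THEN order_trans]) (auto simp: add.commute)
  also have "\<dots> \<le> cmod (v - u) * 2"
  proof -
    have "cmod u + cmod v \<le> 2 * (cmod u ^2 * cmod v ^2)"
    proof -
      have "cmod u \<le> cmod u * cmod v" using nu nv by (simp add: mult_le_cancel_left1)
      moreover have "cmod v \<le> cmod u * cmod v" using nu nv by (simp add: mult_le_cancel_right1)
      moreover have uv1: "1 \<le> cmod u * cmod v" using nu nv
        by (metis mult_mono norm_ge_zero mult_1_left zero_le_one)
      moreover have "cmod u * cmod v \<le> (cmod u * cmod v)^2"
        using uv1 by (simp add: power2_eq_square mult_le_cancel_left1)
      ultimately show ?thesis by (simp add: power_mult_distrib)
    qed
    then have "(cmod u + cmod v) / (cmod u ^2 * cmod v ^2) \<le> 2"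
      using nu nv by (simp add: divide_le_eq)
    then show ?thesis
      by (metis mult_left_mono norm_ge_zero times_divide_eq_right)
  qed
  finally have "cmod (1/u^2 - 1/v^2) \<le> 2 * \<bar>s - a\<bar>" unfolding vu by simp
  then show ?thesis by (simp add: u_def v_def)
qed

lemma tel:
  "cmod ((-1/(complex_of_real b - \<i>)) - (-1/(complex_of_real a - \<i>))
      - complex_of_real (b - a) * (1/(complex_of_real a - \<i>)^2)) \<le> (b-a)^2"
proof -
  define u where "u = complex_of_real a - \<i>"
  define v where "v = complex_of_real b - \<i>"
  define d where "d = complex_of_real (b - a)"
  have u0: "u \<noteq> 0" and v0: "v \<noteq> 0" using cm_nz by (auto simp: u_def v_def)
  have nu: "1 \<le> cmod u" and nv: "1 \<le> cmod v" using cm_ge1 by (auto simp: u_def v_def)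
  have dvu: "d = v - u" by (simp add: d_def u_def v_def)
  have eq: "-1/v - (-1/u) - d * (1/u^2) = -(d^2)/(u^2 * v)"
    using u0 v0 unfolding dvu by (simp add: field_simps power2_eq_square)
  have "cmod (-1/v - (-1/u) - d * (1/u^2)) = cmod d ^2 / (cmod u ^2 * cmod v)"
    unfolding eq by (simp add: norm_mult norm_divide norm_power)
  also have "\<dots> \<le> cmod d ^ 2"
  proof -
    have "1 \<le> cmod u ^2 * cmod v" using nu nv
      by (metis mult_mono norm_ge_zero mult_1_left zero_le_one one_le_power zero_le_power)
    then show ?thesis by (simp add: divide_le_eq mult_le_cancel_left1)
  qed
  also have "cmod d ^ 2 = (b - a)^2" unfolding d_def norm_of_real by simp
  finally show ?thesis by (simp add: u_def v_def d_def)
qed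

lemma FR:
  assumes "R > 0"
  shows "cmod ((-1/(complex_of_real R - \<i>)) - (-1/(complex_of_real (-R) - \<i>))) \<le> 2/R"
proof -
  have n1: "complex_of_real R - \<i> \<noteq> 0" and n2: "complex_of_real (-R) - \<i> \<noteq> 0" using cm_nz[of R] cm_nz[of "-R"] by auto
  have eq: "(-1/(complex_of_real R - \<i>)) - (-1/(complex_of_real (-R) - \<i>)) = complex_of_real (-2*R/(R^2+1))"
  proof -
    have "(-1/(complex_of_real R - \<i>)) - (-1/(complex_of_real (-R) - \<i>)) = complex_of_real (R * 2 / (- 1 - R * R))"
      using n1 n2 by (simp add: field_simps complex_eq_iff power2_eq_square)
    also have "R * 2 / (- 1 - R * R) = -2*R/(R^2+1)"
    proof -
      have "- 1 - R * R = -(R^2+1)" by (simp add: power2_eq_square)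
      then have "R * 2 / (- 1 - R * R) = (R*2)/(-(R^2+1))" by (simp only:)
      also have "\<dots> = -(R*2/(R^2+1))" by (rule divide_minus_right)
      finally have "R * 2 / (- 1 - R * R) = -(R*2/(R^2+1))" .
      then show ?thesis by simp
    qed
    finally show ?thesis .
  qed
  have "\<bar>-2*R/(R^2+1)\<bar> \<le> 2/R"
    using assms by (simp add: abs_div divide_le_eq field_simps power2_eq_square add_pos_nonneg)
  then show ?thesis unfolding eq norm_of_real by simp
qed




context qs begin

lemma g_meas[measurable]: "(\<lambda>s::real. 1/(1+s^2)) \<in> borel_measurable \<nu>"
  by (intro meas_nu) measurable

lemma f_meas[measurable]: "(\<lambda>s::real. 1/(complex_of_real s - \<i>)^2) \<in> borel_measurable \<nu>"
  by (intro meas_nu) measurable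

lemma g_nonneg: "0 \<le> 1/(1+(s::real)^2)"
  by (simp add: add_pos_nonneg)

lemma g_nn_fin: "(\<integral>\<^sup>+ s. ennreal (1/(1+s^2)) \<partial>\<nu>) < \<infinity>"
proof -
  have "(\<integral>\<^sup>+ s. ennreal (1/(1+s^2)) \<partial>\<nu>)
     = (\<integral>\<^sup>+ s. ennreal (1/(1+s^2)) * indicator {s. (0::nat) = 0 \<or> 2^0 \<le> \<bar>s\<bar>} s \<partial>\<nu>)"
    by simp
  also have "\<dots> \<le> ennreal (32*(7/8)^0 * measure \<nu> {-1..1})" by (rule nn_tail)
  finally show ?thesis by (simp add: le_less_trans)
qed

lemma g_int: "integrable \<nu> (\<lambda>s. 1/(1+s^2))"
  by (rule integrableI_nonneg) (use g_nn_fin g_nonneg in auto)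

lemma f_int: "integrable \<nu> (\<lambda>s. 1/(complex_of_real s - \<i>)^2)"
  by (rule Bochner_Integration.integrable_bound[OF g_int f_meas]) (simp add: fi_norm g_nonneg)

lemma tail_real:
  assumes "K \<ge> 1"
  shows "(\<integral> s. 1/(1+s^2) * indicator {s. 2^K \<le> \<bar>s\<bar>} s \<partial>\<nu>) \<le> 32*(7/8)^K * measure \<nu> {-1..1}"
proof -
  have int: "integrable \<nu> (\<lambda>s. 1/(1+s^2) * indicator {s. 2^K \<le> \<bar>s\<bar>} s)"
    by (rule integrable_real_mult_indicator[OF _ g_int]) simp
  have "ennreal (\<integral> s. 1/(1+s^2) * indicator {s. 2^K \<le> \<bar>s\<bar>} s \<partial>\<nu>)
      = (\<integral>\<^sup>+ s. ennreal (1/(1+s^2) * indicator {s. 2^K \<le> \<bar>s\<bar>} s) \<partial>\<nu>)"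
    by (rule nn_integral_eq_integral[symmetric]) (use int g_nonneg in auto)
  also have "\<dots> = (\<integral>\<^sup>+ s. ennreal (1/(1+s^2)) * indicator {s. K = 0 \<or> 2^K \<le> \<bar>s\<bar>} s \<partial>\<nu>)"
    using assms by (intro nn_integral_cong) (auto simp: indicator_def)
  also have "\<dots> \<le> ennreal (32*(7/8)^K * measure \<nu> {-1..1})" by (rule nn_tail)
  finally show ?thesis by (subst (asm) ennreal_le_iff) auto
qed

lemma m1_bound: "measure \<nu> {-1..1} \<le> 2 * (\<integral> s. 1/(1+s^2) \<partial>\<nu>)"
proof -
  have "(\<integral> s. indicator {-1..1} s * (1/2::real) \<partial>\<nu>) \<le> (\<integral> s. 1/(1+s^2) \<partial>\<nu>)"
  proof (rule integral_mono'[OF g_int])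
    fix s :: real
    show "indicator {-1..1} s * (1/2) \<le> 1/(1+s^2)"
    proof (cases "s \<in> {-1..1}")
      case True
      then have "s^2 \<le> 1" by (auto simp: abs_square_le_1)
      moreover have "0 < 1 + s^2" by (simp add: add_pos_nonneg)
      ultimately show ?thesis using True by (simp add: le_divide_eq)
    qed (simp add: g_nonneg)
  qed (simp add: g_nonneg)
  moreover have "(\<integral> s. indicator {-1..1} s * (1/2::real) \<partial>\<nu>) = measure \<nu> {-1..1} / 2"
    using fin[of "-1" 1] by simp
  ultimately show ?thesis by simp
qed

end



lemma ind_decomp:
  fixes c l :: real
  assumes "l > 0"
  shows "indicator {c..<c + real N * l} s = (\<Sum>j<N. indicator {c + real j * l..<c + real (Suc j) * l} s :: real)"
proof (induction N)
  case 0 then show ?case by simp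
next
  case (Suc N)
  have U: "{c..<c + real (Suc N) * l} = {c..<c + real N * l} \<union> {c + real N * l..<c + real (Suc N) * l}"
    by (intro ivl_disj_un_two(3)[symmetric]) (use assms in \<open>auto simp: algebra_simps\<close>)
  have Dj: "{c..<c + real N * l} \<inter> {c + real N * l..<c + real (Suc N) * l} = {}" by auto
  have "indicator {c..<c + real (Suc N) * l} s
      = (indicator {c..<c + real N * l} s + indicator {c + real N * l..<c + real (Suc N) * l} s :: real)"
    unfolding U by (rule indicator_disj_union[OF Dj])
  then show ?case using Suc by simp
qed

context qs begin

lemma core:
  fixes K n :: nat and \<eta> :: real
  assumes K: "K \<ge> 1" and n: "n \<ge> 1" and \<eta>: "0 < \<eta>" "\<eta> \<le> 1"
    and q: "(1+\<delta>)^(2*2^K*n) \<le> 1+\<eta>"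
  shows "cmod (\<integral> s. 1/(complex_of_real s - \<i>)^2 \<partial>\<nu>)
     \<le> (20*2^K/n + 8*2^K*\<eta> + 4/2^K + 64*(7/8)^K) * (\<integral> s. 1/(1+s^2) \<partial>\<nu>)"
proof -
  define R :: nat where "R = 2^K"
  define N where "N = 2*R*n"
  define a where "a j = - real R + real j / real n" for j
  define P where "P j = {a j..<a (Suc j)}" for j
  define m where "m j = measure \<nu> (P j)" for j
  define f where "f s = 1/(complex_of_real s - \<i>)^2" for s
  define g where "g s = 1/(1+s^2)" for s :: real
  define G where "G = (\<integral> s. g s \<partial>\<nu>)"
  have R1: "R \<ge> 1" by (simp add: R_def)
  have np: "real n > 0" using n by simp
  have aSuc: "a (Suc j) = a j + 1/n" for j by (simp add: a_def add_divide_distrib)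
  have mcl: "m j = measure \<nu> {a j..a (Suc j)}" for j by (simp add: m_def P_def halfopen)
  have m_nonneg: "0 \<le> m j" for j by (simp add: m_def)
  have step: "m (Suc j) \<le> (1+\<delta>) * m j \<and> m j \<le> (1+\<delta>) * m (Suc j)" for j
  proof -
    have h: "1/real n > 0" using np by simp
    have e1: "a (Suc j) - 1/n = a j" by (simp add: aSuc)
    have e2: "a (Suc j) + 1/n = a (Suc (Suc j))" by (simp add: aSuc)
    show ?thesis using adj_real[OF h, of "a (Suc j)"] unfolding e1 e2 mcl by simp
  qed
  have pw: "m j \<le> (1+\<delta>)^j * m 0 \<and> m 0 \<le> (1+\<delta>)^j * m j" for j
  proof (induction j)
    case 0 then show ?case by simp
  next
    case (Suc j)
    have d: "0 \<le> 1 + \<delta>" using dpos by simp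
    have "m (Suc j) \<le> (1+\<delta>) * ((1+\<delta>)^j * m 0)"
      using step[of j] Suc mult_left_mono[OF conjunct1[OF Suc] d] by linarith
    moreover have "m 0 \<le> (1+\<delta>)^j * ((1+\<delta>) * m (Suc j))"
      using step[of j] Suc mult_left_mono[OF conjunct2[OF step[of j]], of "(1+\<delta>)^j"] d
      by (meson order_trans zero_le_power)
    ultimately show ?case by (simp add: mult_ac)
  qed
  have qj: "j < N \<Longrightarrow> (1+\<delta>)^j \<le> 1 + \<eta>" for j
    using q dpos by (intro order_trans[OF power_increasing[of j N]]) (auto simp: N_def R_def)
  have mj: "j < N \<Longrightarrow> m j \<le> (1+\<eta>) * m 0 \<and> m 0 \<le> (1+\<eta>) * m j" for j
    using pw[of j] qj[of j] m_nonneg[of 0] m_nonneg[of j]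
    by (meson mult_right_mono order_trans)
  have mdiff: "j < N \<Longrightarrow> \<bar>m j - m 0\<bar> \<le> 2*\<eta> * m 0" for j
  proof -
    assume j: "j < N"
    have C: "\<eta> * m j \<le> \<eta> * ((1+\<eta>) * m 0)" using mj[OF j] \<eta> by (intro mult_left_mono) auto
    have D: "\<eta> * (\<eta> * m 0) \<le> \<eta> * m 0"
      using mult_left_le_one_le[of "\<eta> * m 0" \<eta>] \<eta> m_nonneg[of 0] by simp
    have E: "0 \<le> \<eta> * m 0" using \<eta> m_nonneg[of 0] by simp
    have A: "m j \<le> (1+\<eta>) * m 0" and B: "m 0 \<le> (1+\<eta>) * m j" using mj[OF j] by auto
    show ?thesis using A B C D E unfolding abs_le_iff by (simp add: algebra_simps) linarith?
  qed
  have mlow: "j < N \<Longrightarrow> m 0 \<le> 2 * m j" for j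
  proof -
    assume j: "j < N"
    have "(1+\<eta>) * m j \<le> 2 * m j" using \<eta> m_nonneg[of j] by (intro mult_right_mono) auto
    then show ?thesis using mj[OF j] by linarith
  qed
  have Rr: "real R = 2^K" by (simp add: R_def)
  have a0: "a 0 = - real R" by (simp add: a_def)
  have aN: "a N = real R" using np by (simp add: a_def N_def)
  have aj: "a j = a 0 + real j * (1 / real n)" for j by (simp add: a_def)
  have dec: "indicator {a 0..<a N} s = (\<Sum>j<N. indicator (P j) s :: real)" for s
  proof -
    have "indicator {a 0..<a 0 + real N * (1/real n)} s
        = (\<Sum>j<N. indicator {a 0 + real j * (1/real n)..<a 0 + real (Suc j) * (1/real n)} s :: real)"
      by (rule ind_decomp) (use np in simp)
    then show ?thesis unfolding P_def aj[symmetric] .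
  qed
  have Pm: "P j \<in> sets \<nu>" for j by (simp add: P_def)
  have Pfin: "emeasure \<nu> (P j) < \<infinity>" for j
    by (rule fin_sub[of _ "a j" "a (Suc j)"]) (auto simp: P_def)
  have f_int': "integrable \<nu> f" using f_int unfolding f_def .
  have g_int': "integrable \<nu> g" using g_int unfolding g_def .
  have fle1: "cmod (f s) \<le> 1" for s
    using fi_norm[of s] g_nonneg[of s] unfolding f_def
    by (simp add: divide_le_eq_1 add_pos_nonneg)
  define C where "C = - {a 0..<a N}"
  have Cm: "C \<in> sets \<nu>" by (simp add: C_def)
  define I where "I j = (\<integral> s. indicator (P j) s *\<^sub>R f s \<partial>\<nu>)" for j
  have split: "(\<integral> s. f s \<partial>\<nu>) = (\<Sum>j<N. I j) + (\<integral> s. indicator C s *\<^sub>R f s \<partial>\<nu>)"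
  proof -
    have pt: "f s = (\<Sum>j<N. indicator (P j) s *\<^sub>R f s) + indicator C s *\<^sub>R f s" for s
    proof -
      have "(\<Sum>j<N. indicator (P j) s *\<^sub>R f s) = (\<Sum>j<N. indicator (P j) s :: real) *\<^sub>R f s"
        by (simp add: scaleR_sum_left)
      also have "\<dots> = indicator {a 0..<a N} s *\<^sub>R f s" by (simp add: dec)
      finally show ?thesis by (auto simp: C_def indicator_def)
    qed
    have "(\<integral> s. f s \<partial>\<nu>) = (\<integral> s. (\<Sum>j<N. indicator (P j) s *\<^sub>R f s) + indicator C s *\<^sub>R f s \<partial>\<nu>)"
      by (subst pt) simp
    also have "\<dots> = (\<integral> s. (\<Sum>j<N. indicator (P j) s *\<^sub>R f s) \<partial>\<nu>) + (\<integral> s. indicator C s *\<^sub>R f s \<partial>\<nu>)"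
    proof -
      have intS: "integrable \<nu> (\<lambda>s. \<Sum>j<N. indicator (P j) s *\<^sub>R f s)"
        by (rule Bochner_Integration.integrable_sum) (rule integrable_mult_indicator[OF Pm f_int'])
      have intC: "integrable \<nu> (\<lambda>s. indicator C s *\<^sub>R f s)"
        by (rule integrable_mult_indicator[OF Cm f_int'])
      show ?thesis by (rule Bochner_Integration.integral_add[OF intS intC])
    qed
    also have "(\<integral> s. (\<Sum>j<N. indicator (P j) s *\<^sub>R f s) \<partial>\<nu>) = (\<Sum>j<N. I j)"
      unfolding I_def
      by (intro Bochner_Integration.integral_sum integrable_mult_indicator Pm f_int')
    finally show ?thesis .
  qed
  have piece: "cmod (I j - of_real (m j) * f (a j)) \<le> 2/n * m j" for j
  proof -
    have i1: "integrable \<nu> (\<lambda>s. indicator (P j) s :: real)"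
      using Pfin[of j] Pm[of j] by (simp add: integrable_indicator_iff)
    have i2: "integrable \<nu> (\<lambda>s. indicator (P j) s *\<^sub>R f s)"
      by (rule integrable_mult_indicator[OF Pm f_int'])
    have i3: "integrable \<nu> (\<lambda>s. indicator (P j) s *\<^sub>R f (a j))"
      by (rule integrable_scaleR_left) (rule i1)
    have e: "of_real (m j) * f (a j) = (\<integral> s. indicator (P j) s *\<^sub>R f (a j) \<partial>\<nu>)"
      using i1 by (simp add: m_def scaleR_conv_of_real)
    have "I j - of_real (m j) * f (a j) = (\<integral> s. indicator (P j) s *\<^sub>R (f s - f (a j)) \<partial>\<nu>)"
    proof -
      have "(\<integral> s. indicator (P j) s *\<^sub>R (f s - f (a j)) \<partial>\<nu>)
          = (\<integral> s. indicator (P j) s *\<^sub>R f s - indicator (P j) s *\<^sub>R f (a j) \<partial>\<nu>)"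
        by (simp only: scaleR_diff_right)
      also have "\<dots> = I j - (\<integral> s. indicator (P j) s *\<^sub>R f (a j) \<partial>\<nu>)"
        unfolding I_def by (rule Bochner_Integration.integral_diff[OF i2 i3])
      finally show ?thesis unfolding e by simp
    qed
    also have "cmod \<dots> \<le> (\<integral> s. indicator (P j) s * (2/n) \<partial>\<nu>)"
    proof (rule Bochner_Integration.integral_norm_bound_integral)
      show "integrable \<nu> (\<lambda>s. indicator (P j) s *\<^sub>R (f s - f (a j)))"
        unfolding scaleR_diff_right by (rule Bochner_Integration.integrable_diff[OF i2 i3])
      show "integrable \<nu> (\<lambda>s. indicator (P j) s * (2 / real n))"
        using i1 by simp
      fix s
      show "cmod (indicator (P j) s *\<^sub>R (f s - f (a j))) \<le> indicator (P j) s * (2 / real n)"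
      proof (cases "s \<in> P j")
        case True
        then have sa: "\<bar>s - a j\<bar> \<le> 1/n" using aSuc[of j] by (auto simp: P_def)
        have "cmod (f s - f (a j)) \<le> 2 * (1/n)"
          unfolding f_def by (rule order_trans[OF lip[of s "a j"]]) (use sa in simp)
        then show ?thesis using True by simp
      qed simp
    qed
    also have "\<dots> = 2/n * m j" using i1 by (simp add: m_def)
    finally show ?thesis .
  qed
  have fsum: "cmod (\<Sum>j<N. f (a j)) \<le> 2 * real R + 2 * real n / real R"
  proof -
    define F where "F x = -1/(complex_of_real x - \<i>)" for x
    have tel1: "cmod (F (a (Suc j)) - F (a j) - of_real (1/n) * f (a j)) \<le> (1/n)^2" for j
    proof -
      have "a (Suc j) - a j = 1/n" by (simp add: aSuc)
      then show ?thesis using tel[of "a (Suc j)" "a j"] unfolding F_def f_def by simp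
    qed
    have "(\<Sum>j<N. F (a (Suc j)) - F (a j)) = F (a N) - F (a 0)"
      by (rule sum_lessThan_telescope)
    then have eqs: "(\<Sum>j<N. of_real (1/n) * f (a j)) = (F (a N) - F (a 0))
         - (\<Sum>j<N. F (a (Suc j)) - F (a j) - of_real (1/n) * f (a j))"
      by (simp add: sum_subtractf)
    have "cmod (\<Sum>j<N. of_real (1/n) * f (a j)) \<le> cmod (F (a N) - F (a 0))
         + cmod (\<Sum>j<N. F (a (Suc j)) - F (a j) - of_real (1/n) * f (a j))"
      unfolding eqs by (rule norm_triangle_ineq4)
    also have "cmod (\<Sum>j<N. F (a (Suc j)) - F (a j) - of_real (1/n) * f (a j)) \<le> (\<Sum>j<N. (1/n)^2)"
      by (rule order_trans[OF norm_sum sum_mono]) (rule tel1)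
    also have "cmod (F (a N) - F (a 0)) \<le> 2 / real R"
      unfolding F_def aN a0 using FR[of "real R"] R1 by simp
    also have "(\<Sum>j<N. (1/real n)^2) = 2 * real R / real n"
      using np by (simp add: N_def power2_eq_square)
    finally have b: "cmod (\<Sum>j<N. of_real (1/n) * f (a j)) \<le> 2 / real R + 2 * real R / real n" by simp
    have "(\<Sum>j<N. f (a j)) = of_real (real n) * (\<Sum>j<N. of_real (1/n) * f (a j))"
      using np by (simp add: sum_distrib_left)
    then have "cmod (\<Sum>j<N. f (a j)) = real n * cmod (\<Sum>j<N. of_real (1/n) * f (a j))"
      by (simp add: norm_mult)
    also have "\<dots> \<le> real n * (2 / real R + 2 * real R / real n)"
      using b by (intro mult_left_mono) auto
    also have "\<dots> = 2 * real R + 2 * real n / real R" using np by (simp add: field_simps)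
    finally show ?thesis .
  qed
  define J where "J = {n*(R-1)..<n*(R+1)}"
  have b: "n*(R+1) \<le> n*(2*R)" by (intro mult_le_mono2) (use R1 in simp)
  have JN: "J \<subseteq> {..<N}"
  proof
    fix j assume "j \<in> J"
    then have "j < n*(R+1)" by (simp add: J_def)
    with b have "j < n*(2*R)" by linarith
    then show "j \<in> {..<N}" by (simp add: N_def mult_ac)
  qed
  have cardJ: "card J = 2*n" using R1 by (simp add: J_def algebra_simps diff_mult_distrib2)
  have PJ: "j \<in> J \<Longrightarrow> P j \<subseteq> {-1..1}" for j
  proof -
    assume j: "j \<in> J"
    then have jn1: "n*(R-1) \<le> j" and jn2: "j + 1 \<le> n*(R+1)" by (auto simp: J_def)
    have "real (n*(R-1)) \<le> real j" using jn1 by (simp only: of_nat_le_iff)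
    then have j1: "real n * (real R - 1) \<le> real j" using R1 by (simp add: of_nat_diff)
    have "real (j+1) \<le> real (n*(R+1))" using jn2 by (simp only: of_nat_le_iff)
    then have j2: "real j + 1 \<le> real n * (real R + 1)" by (simp add: algebra_simps)
    have "-1 \<le> a j"
      using j1 np by (simp add: a_def field_simps)
    moreover have "a (Suc j) \<le> 1"
      using j2 np by (simp add: a_def field_simps)
    ultimately show ?thesis by (auto simp: P_def)
  qed
  have i1: "integrable \<nu> (\<lambda>s. indicator (P j) s :: real)" for j
    using Pfin[of j] Pm[of j] by (simp add: integrable_indicator_iff)
  have G_low: "real n * m 0 / 2 \<le> G"
  proof -
    have "(\<integral> s. (\<Sum>j\<in>J. indicator (P j) s) * (1/2::real) \<partial>\<nu>) \<le> G"
      unfolding G_def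
    proof (rule integral_mono'[OF g_int'])
      fix s :: real
      show "0 \<le> g s" unfolding g_def by (rule g_nonneg)
      have le1: "(\<Sum>j\<in>J. indicator (P j) s :: real) \<le> 1"
      proof -
        have "(\<Sum>j\<in>J. indicator (P j) s :: real) \<le> (\<Sum>j<N. indicator (P j) s)"
          by (rule sum_mono2) (use JN in auto)
        also have "\<dots> = indicator {a 0..<a N} s" by (rule dec[symmetric])
        also have "\<dots> \<le> 1" by (simp add: indicator_def)
        finally show ?thesis .
      qed
      show "(\<Sum>j\<in>J. indicator (P j) s) * (1/2) \<le> g s"
      proof (cases "\<exists>j\<in>J. s \<in> P j")
        case True
        then obtain j where "j \<in> J" "s \<in> P j" by blast
        then have "s \<in> {-1..1}" using PJ by blast
        then have "s^2 \<le> 1" by (auto simp: abs_square_le_1)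
        moreover have "0 < 1 + s^2" by (simp add: add_pos_nonneg)
        ultimately have "1/2 \<le> g s" by (simp add: g_def le_divide_eq)
        then show ?thesis using le1 by linarith
      next
        case False
        then have "(\<Sum>j\<in>J. indicator (P j) s :: real) = 0" by (auto simp: indicator_def)
        then show ?thesis unfolding g_def using g_nonneg[of s] by simp
      qed
    qed
    moreover have "(\<integral> s. (\<Sum>j\<in>J. indicator (P j) s) * (1/2::real) \<partial>\<nu>) = (\<Sum>j\<in>J. m j) / 2"
    proof -
      have "(\<integral> s. (\<Sum>j\<in>J. indicator (P j) s) * (1/2::real) \<partial>\<nu>) = (\<integral> s. (\<Sum>j\<in>J. indicator (P j) s :: real) \<partial>\<nu>) * (1/2)"
        by (rule integral_mult_left_zero)
      also have "(\<integral> s. (\<Sum>j\<in>J. indicator (P j) s :: real) \<partial>\<nu>) = (\<Sum>j\<in>J. m j)"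
        by (subst Bochner_Integration.integral_sum) (auto intro: i1 simp: m_def)
      finally show ?thesis by simp
    qed
    moreover have "real n * m 0 \<le> (\<Sum>j\<in>J. m j)"
    proof -
      have "(\<Sum>j\<in>J. m 0 / 2) \<le> (\<Sum>j\<in>J. m j)"
        by (rule sum_mono) (use mlow JN in force)
      moreover have "(\<Sum>j\<in>J. m 0 / 2) = real n * m 0" unfolding sum_constant cardJ by simp
      ultimately show ?thesis by linarith
    qed
    ultimately show ?thesis by simp
  qed
  have tailb: "cmod (\<integral> s. indicator C s *\<^sub>R f s \<partial>\<nu>) \<le> 64*(7/8)^K * G"
  proof -
    have "cmod (\<integral> s. indicator C s *\<^sub>R f s \<partial>\<nu>) \<le> (\<integral> s. 1/(1+s^2) * indicator {s. 2^K \<le> \<bar>s\<bar>} s \<partial>\<nu>)"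
    proof (rule Bochner_Integration.integral_norm_bound_integral)
      show "integrable \<nu> (\<lambda>s. indicator C s *\<^sub>R f s)"
        by (rule integrable_mult_indicator[OF Cm f_int'])
      show "integrable \<nu> (\<lambda>s. 1/(1+s^2) * indicator {s. 2^K \<le> \<bar>s\<bar>} s)"
        by (rule integrable_real_mult_indicator[OF _ g_int]) simp
      fix s
      show "cmod (indicator C s *\<^sub>R f s) \<le> 1/(1+s^2) * indicator {s. 2^K \<le> \<bar>s\<bar>} s"
      proof (cases "s \<in> C")
        case True
        then have "s < - real R \<or> real R \<le> s" by (auto simp: C_def a0 aN)
        then have "2^K \<le> \<bar>s\<bar>" using Rr by auto
        then show ?thesis using True by (simp add: f_def fi_norm)
      qed (simp add: g_nonneg)
    qed
    also have "\<dots> \<le> 32*(7/8)^K * measure \<nu> {-1..1}" by (rule tail_real[OF K])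
    also have "\<dots> \<le> 32*(7/8)^K * (2 * G)"
      unfolding G_def g_def by (intro mult_left_mono m1_bound) auto
    finally show ?thesis by simp
  qed
  define X where "X = 10*real R + 4*real R*real n*\<eta> + 2*real n/real R"
  have X0: "0 \<le> X" using \<eta> by (simp add: X_def)
  have mj2: "j < N \<Longrightarrow> m j \<le> 2 * m 0" for j
  proof -
    assume j: "j < N"
    have "(1+\<eta>) * m 0 \<le> 2 * m 0" using \<eta> m_nonneg[of 0] by (intro mult_right_mono) auto
    then show ?thesis using mj[OF j] by linarith
  qed
  have sumI: "cmod (\<Sum>j<N. I j) \<le> m 0 * X"
  proof -
    have e1: "(\<Sum>j<N. I j) = (\<Sum>j<N. I j - of_real (m j) * f (a j)) + (\<Sum>j<N. of_real (m j) * f (a j))"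
      by (simp add: sum_subtractf)
    have e2: "(\<Sum>j<N. of_real (m j) * f (a j)) = (\<Sum>j<N. of_real (m j - m 0) * f (a j)) + of_real (m 0) * (\<Sum>j<N. f (a j))"
      by (simp add: sum_distrib_left sum.distrib[symmetric] algebra_simps)
    have n1: "cmod (\<Sum>j<N. I j - of_real (m j) * f (a j)) \<le> real N * (2/n * (2 * m 0))"
    proof -
      have "cmod (\<Sum>j<N. I j - of_real (m j) * f (a j)) \<le> (\<Sum>j<N. 2/n * m j)"
        by (rule order_trans[OF norm_sum sum_mono]) (rule piece)
      also have "\<dots> \<le> (\<Sum>j<N. 2/n * (2 * m 0))"
      proof (rule sum_mono)
        fix j assume "j \<in> {..<N}"
        then have "m j \<le> 2 * m 0" using mj2 by auto
        then show "2/n * m j \<le> 2/n * (2 * m 0)" by (intro mult_left_mono) auto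
      qed
      finally show ?thesis by simp
    qed
    have n2: "cmod (\<Sum>j<N. of_real (m j - m 0) * f (a j)) \<le> real N * (2 * \<eta> * m 0)"
    proof -
      have "cmod (\<Sum>j<N. of_real (m j - m 0) * f (a j)) \<le> (\<Sum>j<N. 2 * \<eta> * m 0)"
      proof (rule order_trans[OF norm_sum sum_mono])
        fix j assume "j \<in> {..<N}"
        then have "\<bar>m j - m 0\<bar> \<le> 2 * \<eta> * m 0" using mdiff by auto
        moreover have "cmod (f (a j)) \<le> 1" by (rule fle1)
        ultimately have "\<bar>m j - m 0\<bar> * cmod (f (a j)) \<le> 2 * \<eta> * m 0 * 1"
          by (intro mult_mono) auto
        then show "cmod (of_real (m j - m 0) * f (a j)) \<le> 2 * \<eta> * m 0"
          by (simp add: norm_mult del: of_real_diff)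
      qed
      then show ?thesis by simp
    qed
    have n3: "cmod (of_real (m 0) * (\<Sum>j<N. f (a j))) \<le> m 0 * (2 * real R + 2 * real n / real R)"
      using fsum m_nonneg[of 0] by (simp add: norm_mult abs_of_nonneg mult_left_mono)
    have "cmod (\<Sum>j<N. I j) \<le> real N * (2/n * (2 * m 0)) + real N * (2 * \<eta> * m 0)
          + m 0 * (2 * real R + 2 * real n / real R)"
    proof -
      have t: "cmod (A + (B + D)) \<le> cmod A + (cmod B + cmod D)" for A B D :: complex
        by (rule order_trans[OF norm_triangle_ineq add_left_mono[OF norm_triangle_ineq]])
      show ?thesis unfolding e1 e2 by (rule order_trans[OF t]) (use n1 n2 n3 in linarith)
    qed
    also have "\<dots> = m 0 * X"
      using np by (simp add: X_def N_def field_simps)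
    finally show ?thesis .
  qed
  have m0G: "m 0 * X \<le> (20*real R/n + 8*real R*\<eta> + 4/real R) * G"
  proof -
    have "m 0 \<le> 2 * G / real n" using G_low np by (simp add: field_simps)
    then have "m 0 * X \<le> 2 * G / real n * X" using X0 by (intro mult_right_mono)
    also have "\<dots> = (20*real R/n + 8*real R*\<eta> + 4/real R) * G"
      using np R1 by (simp add: X_def field_simps)
    finally show ?thesis .
  qed
  have "cmod (\<integral> s. f s \<partial>\<nu>) \<le> cmod (\<Sum>j<N. I j) + cmod (\<integral> s. indicator C s *\<^sub>R f s \<partial>\<nu>)"
    unfolding split by (rule norm_triangle_ineq)
  also have "\<dots> \<le> (20*real R/n + 8*real R*\<eta> + 4/real R) * G + 64*(7/8)^K * G"
    using sumI m0G tailb by linarith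
  finally have "cmod (\<integral> s. f s \<partial>\<nu>) \<le> (20*2^K/n + 8*2^K*\<eta> + 4/2^K + 64*(7/8)^K) * G"
    unfolding Rr by (simp add: algebra_simps)
  then show ?thesis unfolding f_def G_def g_def .
qed

end



lemma delta_choice:
  fixes N :: nat and \<eta> :: real
  assumes "N > 0" "\<eta> > 0"
  shows "\<exists>\<delta>>0. \<delta> \<le> 1/4 \<and> (1+\<delta>)^N \<le> 1+\<eta>"
proof -
  define \<delta> where "\<delta> = min (1/4) (ln (1+\<eta>) / real N)"
  have l: "ln (1+\<eta>) > 0" using assms by simp
  have d0: "\<delta> > 0" using l assms by (simp add: \<delta>_def)
  have "(1+\<delta>)^N \<le> (exp \<delta>)^N"
    by (rule power_mono) (use d0 exp_ge_add_one_self[of \<delta>] in \<open>auto simp: add.commute\<close>)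
  also have "\<dots> = exp (real N * \<delta>)" by (simp add: exp_of_nat_mult)
  also have "\<dots> \<le> exp (ln (1+\<eta>))"
  proof -
    have "real N * \<delta> \<le> real N * (ln (1+\<eta>) / real N)"
      by (intro mult_left_mono) (auto simp: \<delta>_def)
    also have "\<dots> = ln (1+\<eta>)" using assms by simp
    finally show ?thesis by simp
  qed
  also have "\<dots> = 1+\<eta>" using assms by simp
  finally have "(1+\<delta>)^N \<le> 1+\<eta>" .
  moreover have "\<delta> \<le> 1/4" unfolding \<delta>_def by (rule min.cobounded1)
  ultimately show ?thesis using d0 by blast
qed

lemma main_nu:
  fixes \<epsilon> :: real
  assumes "\<epsilon> > 0"
  shows "\<exists>\<delta>>0. \<forall>\<nu>. sets \<nu> = sets borel \<and> (\<forall>a b. emeasure \<nu> {a..b} < \<infinity>) \<and> adj_interval_cond \<delta> \<nu> \<longrightarrow>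
      (\<integral>\<^sup>+ s. ennreal (1/(1+s^2)) \<partial>\<nu>) < \<infinity> \<and>
      cmod (\<integral> s. 1/(complex_of_real s - \<i>)^2 \<partial>\<nu>) \<le> \<epsilon> * (\<integral> s. 1/(1+s^2) \<partial>\<nu>)"
proof -
  obtain K0 where K0: "(7/8::real)^K0 < \<epsilon>/204"
    using real_arch_pow_inv[of "\<epsilon>/204" "7/8"] assms by auto
  define K where "K = Suc K0"
  have K1: "K \<ge> 1" by (simp add: K_def)
  have c1: "4/2^K + 64*(7/8)^K \<le> \<epsilon>/3"
  proof -
    have "(1/2::real)^K \<le> (7/8)^K" by (rule power_mono) auto
    then have "4/2^K \<le> 4*(7/8::real)^K" by (simp add: power_divide)
    moreover have "(7/8::real)^K \<le> (7/8)^K0" unfolding K_def by (rule power_decreasing) auto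
    ultimately show ?thesis using K0 by linarith
  qed
  obtain n0 :: nat where n0: "60*2^K/\<epsilon> < real n0" using reals_Archimedean2 by blast
  define n where "n = Suc n0"
  have n1: "n \<ge> 1" by (simp add: n_def)
  have c2: "20*2^K/real n \<le> \<epsilon>/3"
  proof -
    have a: "60*2^K < \<epsilon> * real n0" using n0 assms by (simp add: divide_less_eq mult.commute)
    have b: "\<epsilon> * real n0 \<le> \<epsilon> * real n" using assms by (simp add: n_def)
    from a b have "60*2^K < \<epsilon> * real n" by linarith
    then show ?thesis using n1 by (simp add: divide_le_eq field_simps)
  qed
  define \<eta> where "\<eta> = min 1 (\<epsilon>/(24*2^K))"
  have \<eta>0: "0 < \<eta>" "\<eta> \<le> 1" using assms by (auto simp: \<eta>_def)
  have c3: "8*2^K*\<eta> \<le> \<epsilon>/3"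
  proof -
    have "\<eta> \<le> \<epsilon>/(24*2^K)" by (simp add: \<eta>_def)
    then have "8*2^K*\<eta> \<le> 8*2^K*(\<epsilon>/(24*2^K))" by (intro mult_left_mono) auto
    then show ?thesis by simp
  qed
  obtain \<delta> where \<delta>: "\<delta> > 0" "\<delta> \<le> 1/4" "(1+\<delta>)^(2*2^K*n) \<le> 1+\<eta>"
    using delta_choice[of "2*2^K*n" \<eta>] n1 \<eta>0 by auto
  show ?thesis
  proof (intro exI[of _ \<delta>] conjI allI impI)
    show "\<delta> > 0" by (rule \<delta>)
    fix \<nu> :: "real measure"
    assume H: "sets \<nu> = sets borel \<and> (\<forall>a b. emeasure \<nu> {a..b} < \<infinity>) \<and> adj_interval_cond \<delta> \<nu>"
    interpret qs \<nu> \<delta> using H \<delta> by unfold_locales auto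
    show "(\<integral>\<^sup>+ s. ennreal (1/(1+s^2)) \<partial>\<nu>) < \<infinity>" by (rule g_nn_fin)
    have G0: "0 \<le> (\<integral> s. 1/(1+s^2) \<partial>\<nu>)" by (rule Bochner_Integration.integral_nonneg) (simp add: g_nonneg)
    have "cmod (\<integral> s. 1/(complex_of_real s - \<i>)^2 \<partial>\<nu>)
        \<le> (20*2^K/n + 8*2^K*\<eta> + 4/2^K + 64*(7/8)^K) * (\<integral> s. 1/(1+s^2) \<partial>\<nu>)"
      by (rule core[OF K1 n1 \<eta>0 \<delta>(3)])
    also have "\<dots> \<le> \<epsilon> * (\<integral> s. 1/(1+s^2) \<partial>\<nu>)"
      using c1 c2 c3 G0 by (intro mult_right_mono) auto
    finally show "cmod (\<integral> s. 1/(complex_of_real s - \<i>)^2 \<partial>\<nu>) \<le> \<epsilon> * (\<integral> s. 1/(1+s^2) \<partial>\<nu>)" .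
  qed
qed




lemma preimg:
  fixes x y c d :: real
  assumes "y > 0"
  shows "(\<lambda>t. (t - x)/y) -` {c..d} = {x + y*c..x + y*d}"
  using assms by (auto simp: field_simps)

lemma fi_transfer:
  fixes z :: complex and t :: real
  assumes "Im z > 0"
  shows "1/(complex_of_real ((t - Re z)/Im z) - \<i>)^2 = complex_of_real ((Im z)^2) * (1/(complex_of_real t - z)^2)"
proof -
  have y: "Im z \<noteq> 0" using assms by simp
  have "complex_of_real ((t - Re z)/Im z) - \<i> = (complex_of_real t - z) / complex_of_real (Im z)"
    using y by (simp add: complex_eq_iff field_simps)
  then show ?thesis using y by (simp add: power_divide)
qed

lemma gi_transfer:
  fixes z :: complex and t :: real
  assumes "Im z > 0"
  shows "1/(1+((t - Re z)/Im z)^2) = (Im z)^2 * (1/(cmod (complex_of_real t - z))^2)"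
proof -
  have y: "Im z \<noteq> 0" using assms by simp
  have n: "(cmod (complex_of_real t - z))^2 = (t - Re z)^2 + (Im z)^2"
    by (simp add: cmod_power2)
  show ?thesis unfolding n using y by (simp add: field_simps power2_eq_square)
qed

theorem lemma4p1:
  fixes \<epsilon> :: real
  assumes "\<epsilon> > 0"
  shows "\<exists>\<delta>>0. \<forall>M z. radon_measure_real M \<and> adj_interval_cond \<delta> M \<and> Im z > 0 \<longrightarrow>
           (\<integral>\<^sup>+ t. ennreal (1 / (cmod (complex_of_real t - z))\<^sup>2) \<partial>M) < \<infinity> \<and>
           cmod (\<integral> t. 1 / (complex_of_real t - z)\<^sup>2 \<partial>M)
             \<le> \<epsilon> * (\<integral> t. 1 / (cmod (complex_of_real t - z))\<^sup>2 \<partial>M)"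
proof -
  obtain \<delta> where \<delta>0: "\<delta> > 0" and H: "\<And>\<nu>. sets \<nu> = sets borel \<Longrightarrow> (\<forall>a b. emeasure \<nu> {a..b} < \<infinity>)
      \<Longrightarrow> adj_interval_cond \<delta> \<nu> \<Longrightarrow>
      (\<integral>\<^sup>+ s. ennreal (1/(1+s^2)) \<partial>\<nu>) < \<infinity> \<and>
      cmod (\<integral> s. 1/(complex_of_real s - \<i>)^2 \<partial>\<nu>) \<le> \<epsilon> * (\<integral> s. 1/(1+s^2) \<partial>\<nu>)"
    using main_nu[OF assms] by blast
  show ?thesis
  proof (intro exI[of _ \<delta>] conjI allI impI)
    show "\<delta> > 0" by (rule \<delta>0)
    fix M :: "real measure" and z :: complex
    assume A: "radon_measure_real M \<and> adj_interval_cond \<delta> M \<and> Im z > 0"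
    then have sM: "sets M = sets borel" and finK: "\<And>K. compact K \<Longrightarrow> emeasure M K < \<infinity>"
      and adjM: "adj_interval_cond \<delta> M" and yp: "Im z > 0"
      by (auto simp: radon_measure_real_def)
    define x where "x = Re z"
    define y where "y = Im z"
    have y0: "y > 0" using yp by (simp add: y_def)
    define \<phi> where "\<phi> t = (t - x)/y" for t
    have spM: "space M = UNIV" using sets_eq_imp_space_eq[OF sM] by simp
    have \<phi>b: "\<phi> \<in> borel_measurable borel" unfolding \<phi>_def by measurable
    have \<phi>m: "\<phi> \<in> measurable M borel" using \<phi>b measurable_cong_sets[OF sM refl] by blast
    define \<nu> where "\<nu> = distr M borel \<phi>"
    have s\<nu>: "sets \<nu> = sets borel" by (simp add: \<nu>_def)
    have em: "emeasure \<nu> {c..d} = emeasure M {x + y*c..x + y*d}" for c d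
    proof -
      have pre: "\<phi> -` {c..d} = {x + y*c..x + y*d}" unfolding \<phi>_def by (rule preimg[OF y0])
      show ?thesis unfolding \<nu>_def using \<phi>m
        by (subst emeasure_distr) (auto simp: spM pre)
    qed
    have fin\<nu>: "\<forall>c d. emeasure \<nu> {c..d} < \<infinity>"
      using finK by (auto simp: em)
    have adj\<nu>: "adj_interval_cond \<delta> \<nu>"
      unfolding adj_interval_cond_def
    proof (intro allI impI)
      fix x0 h :: real assume h: "h > 0"
      define X where "X = x + y*x0"
      define Hh where "Hh = y*h"
      have Hh0: "Hh > 0" using h y0 by (simp add: Hh_def)
      have e1: "emeasure \<nu> {x0 - h..x0} = emeasure M {X - Hh..X}"
        unfolding em X_def Hh_def by (simp add: algebra_simps)
      have e2: "emeasure \<nu> {x0..x0 + h} = emeasure M {X..X + Hh}"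
        unfolding em X_def Hh_def by (simp add: algebra_simps)
      show "emeasure \<nu> {x0 - h..x0} \<le> ennreal (1 + \<delta>) * emeasure \<nu> {x0..x0 + h} \<and>
            emeasure \<nu> {x0..x0 + h} \<le> ennreal (1 + \<delta>) * emeasure \<nu> {x0 - h..x0}"
        unfolding e1 e2 using adjM Hh0 unfolding adj_interval_cond_def by blast
    qed
    have R: "(\<integral>\<^sup>+ s. ennreal (1/(1+s^2)) \<partial>\<nu>) < \<infinity> \<and>
      cmod (\<integral> s. 1/(complex_of_real s - \<i>)^2 \<partial>\<nu>) \<le> \<epsilon> * (\<integral> s. 1/(1+s^2) \<partial>\<nu>)"
      by (rule H[OF s\<nu> fin\<nu> adj\<nu>])
    define h where "h t = 1 / (cmod (complex_of_real t - z))\<^sup>2" for t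
    define k where "k t = 1 / (complex_of_real t - z)\<^sup>2" for t
    have gt: "1/(1+(\<phi> t)^2) = y^2 * h t" for t
      unfolding \<phi>_def h_def x_def y_def by (rule gi_transfer[OF yp])
    have ft: "1/(complex_of_real (\<phi> t) - \<i>)^2 = complex_of_real (y^2) * k t" for t
      unfolding \<phi>_def k_def x_def y_def by (rule fi_transfer[OF yp])
    have nn: "(\<integral>\<^sup>+ s. ennreal (1/(1+s^2)) \<partial>\<nu>) = ennreal (y^2) * (\<integral>\<^sup>+ t. ennreal (h t) \<partial>M)"
    proof -
      have "(\<integral>\<^sup>+ s. ennreal (1/(1+s^2)) \<partial>\<nu>) = (\<integral>\<^sup>+ t. ennreal (1/(1+(\<phi> t)^2)) \<partial>M)"
        unfolding \<nu>_def by (rule nn_integral_distr[OF \<phi>m]) measurable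
      also have "\<dots> = (\<integral>\<^sup>+ t. ennreal (y^2) * ennreal (h t) \<partial>M)"
        unfolding gt
      proof (intro nn_integral_cong)
        fix t
        show "ennreal (y^2 * h t) = ennreal (y^2) * ennreal (h t)"
          by (rule ennreal_mult) (auto simp: h_def)
      qed
      also have "\<dots> = ennreal (y^2) * (\<integral>\<^sup>+ t. ennreal (h t) \<partial>M)"
        by (rule nn_integral_cmult) (simp add: h_def measurable_cong_sets[OF sM refl])
      finally show ?thesis .
    qed
    have ig: "(\<integral> s. 1/(1+s^2) \<partial>\<nu>) = y^2 * (\<integral> t. h t \<partial>M)"
    proof -
      have "(\<integral> s. 1/(1+s^2) \<partial>\<nu>) = (\<integral> t. 1/(1+(\<phi> t)^2) \<partial>M)"
        unfolding \<nu>_def by (rule integral_distr[OF \<phi>m]) measurable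
      also have "\<dots> = y^2 * (\<integral> t. h t \<partial>M)" unfolding gt by simp
      finally show ?thesis .
    qed
    have ifi: "(\<integral> s. 1/(complex_of_real s - \<i>)^2 \<partial>\<nu>) = complex_of_real (y^2) * (\<integral> t. k t \<partial>M)"
    proof -
      have "(\<integral> s. 1/(complex_of_real s - \<i>)^2 \<partial>\<nu>) = (\<integral> t. 1/(complex_of_real (\<phi> t) - \<i>)^2 \<partial>M)"
        unfolding \<nu>_def by (rule integral_distr[OF \<phi>m]) measurable
      also have "\<dots> = complex_of_real (y^2) * (\<integral> t. k t \<partial>M)" unfolding ft by simp
      finally show ?thesis .
    qed
    have y2: "y^2 > 0" using y0 by simp
    show "(\<integral>\<^sup>+ t. ennreal (1 / (cmod (complex_of_real t - z))\<^sup>2) \<partial>M) < \<infinity>"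
    proof -
      have "ennreal (y^2) * (\<integral>\<^sup>+ t. ennreal (h t) \<partial>M) < \<infinity>" using R nn by simp
      then have "(\<integral>\<^sup>+ t. ennreal (h t) \<partial>M) < \<infinity>"
        using y2 by (auto simp: ennreal_mult_less_top)
      then show ?thesis by (simp add: h_def)
    qed
    have "y^2 * cmod (\<integral> t. k t \<partial>M) \<le> \<epsilon> * (y^2 * (\<integral> t. h t \<partial>M))"
      using R unfolding ifi ig by (simp add: norm_mult norm_power)
    then have "y^2 * cmod (\<integral> t. k t \<partial>M) \<le> y^2 * (\<epsilon> * (\<integral> t. h t \<partial>M))" by (simp add: mult_ac)
    then have "cmod (\<integral> t. k t \<partial>M) \<le> \<epsilon> * (\<integral> t. h t \<partial>M)" using y2 by simp
    then show "cmod (\<integral> t. 1 / (complex_of_real t - z)\<^sup>2 \<partial>M)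
             \<le> \<epsilon> * (\<integral> t. 1 / (cmod (complex_of_real t - z))\<^sup>2 \<partial>M)"
      by (simp add: h_def k_def)
  qed
qed


end
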